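(* Let $R$ be a commutative unital $\mathbb C$-algebra, $c\in\mathbb C\setminus\{0\}$, and let $\partial$ be the unique $R$-linear derivation of the Laurent polynomial ring $R[\lambda,\lambda^{-1}]$ with $\partial\lambda=c$. Let $m\ge1$ and for $k=1,\dots,m$ define the operator \[ D_k=(-1)^{\frac{k(k+1)}2}\sum_{j=0}^{k-1}\frac{(k-1+j)!}{2^j(k-1-j)!\,j!}\,(-c)^j\,\lambda^{-(k+j)}\,\partial^{\,k-j} \] on $R[\lambda,\lambda^{-1}]$ (apply $\partial^{k-j}$, then multiply by $\lambda^{-(k+j)}$). Let $p=\sum_{j=0}^Na_j\lambda^j\in R[\lambda]$. Then $D_kp\in R[\lambda]$ for all $k=1,\dots,m$ if and only if $a_j=0$ for all odd $j$ with $1\le j\le 2m-1$. *)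

theory Defs
  imports Complex_Main "HOL-Computational_Algebra.Polynomial"
begin

text \<open>The commutative unital C-algebra R is a type 'a::comm_ring_1 together with a
unital ring homomorphism phi : complex => 'a (the structure map).
Laurent polynomials in R[lambda, lambda^-1] are represented by their coefficient
functions int => 'a (coefficient of lambda^n at n).\<close>

definition is_C_algebra_map :: "(complex \<Rightarrow> 'a::comm_ring_1) \<Rightarrow> bool" where
  "is_C_algebra_map \<phi> \<longleftrightarrow> \<phi> 1 = 1 \<and> (\<forall>x y. \<phi> (x + y) = \<phi> x + \<phi> y) \<and> (\<forall>x y. \<phi> (x * y) = \<phi> x * \<phi> y)"

text \<open>The unique R-linear derivation with d lambda = c: d(lambda^n) = n c lambda^(n-1).\<close>
definition lderiv :: "(complex \<Rightarrow> 'a::comm_ring_1) \<Rightarrow> complex \<Rightarrow> (int \<Rightarrow> 'a) \<Rightarrow> (int \<Rightarrow> 'a)" where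
  "lderiv \<phi> c f = (\<lambda>n. \<phi> c * of_int (n + 1) * f (n + 1))"

definition lmul_pow :: "int \<Rightarrow> (int \<Rightarrow> 'a::comm_ring_1) \<Rightarrow> (int \<Rightarrow> 'a)" where
  "lmul_pow s f = (\<lambda>n. f (n - s))"

definition Dcoef :: "complex \<Rightarrow> nat \<Rightarrow> nat \<Rightarrow> complex" where
  "Dcoef c k j = (-1) ^ (k * (k + 1) div 2)
      * (fact (k - 1 + j) / (2 ^ j * fact (k - 1 - j) * fact j)) * (- c) ^ j"

definition Dop :: "(complex \<Rightarrow> 'a::comm_ring_1) \<Rightarrow> complex \<Rightarrow> nat \<Rightarrow> (int \<Rightarrow> 'a) \<Rightarrow> (int \<Rightarrow> 'a)" where
  "Dop \<phi> c k f = (\<lambda>n. \<Sum>j<k. \<phi> (Dcoef c k j)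
        * lmul_pow (- int (k + j)) ((lderiv \<phi> c ^^ (k - j)) f) n)"

definition poly_to_laurent :: "'a::comm_ring_1 poly \<Rightarrow> (int \<Rightarrow> 'a)" where
  "poly_to_laurent p = (\<lambda>n. if n \<ge> 0 then coeff p (nat n) else 0)"

definition laurent_is_poly :: "(int \<Rightarrow> 'a::comm_ring_1) \<Rightarrow> bool" where
  "laurent_is_poly f \<longleftrightarrow> (\<forall>n<0. f n = 0)"

end

theory Submission
  imports Defs
begin


definition B :: "nat \<Rightarrow> nat \<Rightarrow> complex" where
 "B k j = (if j < k then (-1)^j * fact(k-1+j)/(2^j*fact(k-1-j)*fact j) else 0)"

lemma aux: "(a::complex) \<noteq> 0 \<Longrightarrow> s * (2*a*(q*F)) / (2*P*(a*G)) = q*(s*F)/(P*G)"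
  by (simp add: field_simps)

lemma gen: "Q * R = a*F/D \<Longrightarrow> -(a*(Y*F))/D = -Q*(Y*(R::complex))"
proof -
  assume h: "Q * R = a*F/D"
  have "-Q*(Y*R) = -((Q*R)*Y)" by (simp add: mult_ac)
  also have "\<dots> = -(a*(Y*F))/D" unfolding h by (simp add: mult_ac)
  finally show ?thesis by simp
qed

lemma gen2: "(u::complex) \<noteq> 0 \<Longrightarrow> X / (2 * P * S * (u * G)) * (2 * u) = X / (P*S*G)"
  by (cases "P*S*G = 0") (auto simp: field_simps)

lemma B_rec:
  assumes "i < k"
  shows "B (Suc k) (Suc i) = B k (Suc i) - of_nat (k+i) * B k i"
proof (cases "Suc i = k")
  case True
  hence k: "k = Suc i" by simp
  have e: "Suc i + i = Suc (i + i)" "Suc (i + Suc i) = Suc (Suc (i+i))" by simp_all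
  have h: "(2 + 2*of_nat i :: complex) = 2*(1+of_nat i)" by simp
  have nz: "(1 + of_nat i :: complex) \<noteq> 0" "(of_nat i + 1 :: complex) \<noteq> 0"
    by (metis of_nat_Suc of_nat_eq_0_iff nat.distinct(1) add.commute)+
  show ?thesis unfolding B_def k
    using nz apply (simp add: e fact_Suc power_Suc)
    apply (subst h) using aux nz(1) by blast
next
  case False
  then obtain r where k: "k = Suc (Suc (i + r))" using assms
    by (metis add_Suc_right less_Suc_eq less_imp_Suc_add)
  have e: "Suc (i + r) + Suc i = Suc (Suc (i+i+r))" "Suc (Suc (i + r)) + i = Suc (Suc (i+i+r))"
     "Suc (i + r) + i = Suc (i+i+r)" "Suc (i + r) - i = Suc r" "Suc (Suc (i + r)) - Suc i = Suc r"
     "Suc (i + r) - Suc i = r" by simp_all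
  define Q :: complex where "Q = (-1)^i * fact (Suc (i+i+r)) / (2^(Suc i) * fact (Suc r) * fact (Suc i))"
  have f1: "fact (Suc (Suc (Suc (i+i+r)))) = (of_nat (i+i+r) + 3) * (of_nat (i+i+r) + 2) * (fact (Suc (i+i+r)) :: complex)"
    by (simp add: fact_Suc algebra_simps)
  have f2: "fact (Suc (Suc (i+i+r))) = (of_nat (i+i+r) + 2) * (fact (Suc (i+i+r)) :: complex)"
    by (simp add: fact_Suc algebra_simps)
  have fr: "fact (Suc r) = (of_nat r + 1) * (fact r :: complex)" by (simp add: fact_Suc algebra_simps)
  have fi: "fact (Suc i) = (of_nat i + 1) * (fact i :: complex)" by (simp add: fact_Suc algebra_simps)
  have nzr: "(of_nat r + 1 :: complex) \<noteq> 0" "(of_nat i + 1 :: complex) \<noteq> 0"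
    by (metis of_nat_Suc of_nat_eq_0_iff nat.distinct(1) add.commute)+
  have b1: "B (Suc k) (Suc i) = - Q * ((of_nat (i+i+r) + 3) * (of_nat (i+i+r) + 2))"
    unfolding B_def k Q_def using e by (simp add: f1 add.commute add.left_commute)
  let ?D = "2^(Suc i) * fact r * fact (Suc i) :: complex"
  have b2a: "B k (Suc i) = - ((-1)^i * ((of_nat (i+i+r) + 2) * fact (Suc (i+i+r)))) / ?D"
    unfolding B_def k using e by (simp add: f2 add.commute add.left_commute)
  have b2b: "Q * (of_nat r + 1) = (-1)^i * fact (Suc (i+i+r)) / ?D"
    unfolding Q_def fr using nzr(1) by simp
  have b2: "B k (Suc i) = - Q * ((of_nat (i+i+r) + 2) * (of_nat r + 1))"
    unfolding b2a using gen[OF b2b] .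
  let ?E = "2^i * fact (Suc r) * fact i :: complex"
  have b3a: "B k i = (-1)^i * fact (Suc (i+i+r)) / ?E"
    unfolding B_def k using e by (simp add: add.commute add.left_commute)
  have b3b: "Q * (2 * (of_nat i + 1)) = (-1)^i * fact (Suc (i+i+r)) / ?E"
    unfolding Q_def fi power_Suc by (rule gen2[OF nzr(2)])
  have b3: "B k i = Q * (2 * (of_nat i + 1))"
    using b3a b3b by simp
  show ?thesis unfolding b1 b2 b3 by (simp add: k algebra_simps)
qed
definition ff :: "nat \<Rightarrow> complex \<Rightarrow> complex" where "ff m x = (\<Prod>s<m. x - of_nat s)"

lemma B_k0: "k \<ge> 1 \<Longrightarrow> B k 0 = 1"
  by (simp add: B_def)

lemma B_kk: "B k k = 0" by (simp add: B_def)

lemma S_prod: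
  assumes "k \<ge> 1"
  shows "(\<Sum>j<k. B k j * ff (k-j) x) = (\<Prod>i<k. x - 2 * of_nat i)"
  using assms
proof (induction k rule: dec_induct)
  case base
  then show ?case by (simp add: B_def ff_def)
next
  case (step k)
  have k1: "k \<ge> 1" using step by simp
  have L: "(\<Sum>j<Suc k. B (Suc k) j * ff (Suc k - j) x)
      = ff (Suc k) x + (\<Sum>i<k. (B k (Suc i) - of_nat (k+i) * B k i) * ff (k - i) x)"
    unfolding sum.lessThan_Suc_shift
    by (simp add: B_k0 B_rec ff_def)
  have t1: "(\<Sum>j<k. B k j * ff (Suc (k-j)) x) = ff (Suc k) x + (\<Sum>i<k. B k (Suc i) * ff (k - i) x)"
  proof -
    have "(\<Sum>j<k. B k j * ff (Suc (k-j)) x) = (\<Sum>j<Suc k. B k j * ff (Suc (k-j)) x)"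
      by (simp add: B_kk)
    also have "\<dots> = ff (Suc k) x + (\<Sum>i<k. B k (Suc i) * ff (k - i) x)"
      unfolding sum.lessThan_Suc_shift
      by (simp add: B_k0[OF k1] Suc_diff_Suc)
    finally show ?thesis .
  qed
  have t2: "(\<Sum>j<k. B k j * ff (k-j) x * (x - 2 * of_nat k))
      = (\<Sum>j<k. B k j * ff (Suc (k-j)) x) - (\<Sum>j<k. of_nat (k+j) * B k j * ff (k - j) x)"
    unfolding sum_subtractf[symmetric]
  proof (rule sum.cong)
    fix j assume "j \<in> {..<k}"
    hence "j < k" by simp
    thus "B k j * ff (k-j) x * (x - 2 * of_nat k) = B k j * ff (Suc (k-j)) x - of_nat (k+j) * B k j * ff (k - j) x"
      by (simp add: ff_def of_nat_diff algebra_simps)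
  qed simp
  show ?case
    unfolding L prod.lessThan_Suc step.IH[symmetric] sum_distrib_right t2 t1
    by (simp add: algebra_simps sum_subtractf)
qed
locale calg =
  fixes \<phi> :: "complex \<Rightarrow> 'a::comm_ring_1"
  assumes hom: "is_C_algebra_map \<phi>"

context calg
begin

lemma phi_1: "\<phi> 1 = 1" and phi_add: "\<phi> (x + y) = \<phi> x + \<phi> y" and phi_mult: "\<phi> (x * y) = \<phi> x * \<phi> y"
  using hom unfolding is_C_algebra_map_def by auto

lemma phi_0: "\<phi> 0 = 0"
  using phi_add[of 0 0] by simp

lemma phi_uminus: "\<phi> (- x) = - \<phi> x"
  using phi_add[of x "-x"] phi_0 by (simp add: eq_neg_iff_add_eq_0 add.commute)

lemma phi_of_nat: "\<phi> (of_nat n) = of_nat n"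
  by (induction n) (simp_all add: phi_0 phi_add phi_1 add.commute)

lemma phi_of_int: "\<phi> (of_int z) = of_int z"
  by (cases z rule: int_cases) (simp_all add: phi_of_nat phi_uminus del: of_nat_Suc)

lemma phi_power: "\<phi> (x ^ n) = \<phi> x ^ n"
  by (induction n) (simp_all add: phi_1 phi_mult)

lemma phi_sum: "\<phi> (\<Sum>j<(k::nat). f j) = (\<Sum>j<k. \<phi> (f j))"
  by (induction k) (simp_all add: phi_0 phi_add)

lemma phi_prod: "\<phi> (\<Prod>j<(k::nat). f j) = (\<Prod>j<k. \<phi> (f j))"
  by (induction k) (simp_all add: phi_1 phi_mult)

lemma phi_cancel: "z \<noteq> 0 \<Longrightarrow> \<phi> z * a = 0 \<Longrightarrow> a = 0"
proof -
  assume z: "z \<noteq> 0" and h: "\<phi> z * a = 0"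
  have "\<phi> (inverse z) * (\<phi> z * a) = a"
    using z by (simp add: mult.assoc[symmetric] phi_mult[symmetric] phi_1)
  thus ?thesis using h by simp
qed

lemma lderiv_pow: "(lderiv \<phi> c ^^ i) f = (\<lambda>n. \<phi> c ^ i * (\<Prod>t<i. of_int (n + 1 + int t)) * f (n + int i))"
proof (induction i arbitrary: f)
  case 0 then show ?case by simp
next
  case (Suc i)
  show ?case
    unfolding funpow_Suc_right comp_def Suc.IH[of "lderiv \<phi> c f"]
    by (rule ext) (simp add: lderiv_def algebra_simps)
qed

end

context calg
begin
lemma ff_rev: "ff m x = (\<Prod>t<m. x - of_nat m + 1 + of_nat t)"
  unfolding ff_def prod.nat_diff_reindex[symmetric, where g="\<lambda>s. x - of_nat s"]
  by (rule prod.cong) (auto simp: of_nat_diff)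

lemma term_eq:
  assumes "j < k"
  shows "Dcoef c k j * c^(k-j) * (\<Prod>t<k-j. of_int (n + int (k+j) + 1 + int t))
     = (-1)^(k*(k+1) div 2) * c^k * (B k j * ff (k-j) (of_int (n + 2 * int k)))"
proof -
  have p: "(\<Prod>t<k-j. of_int (n + int (k+j) + 1 + int t)) = ff (k-j) (of_int (n + 2 * int k))"
    unfolding ff_rev
  proof (intro prod.cong refl)
    fix t assume "t \<in> {..<k-j}"
    have "n + int (k+j) + 1 + int t = (n + 2 * int k) - int (k-j) + 1 + int t" using assms by simp
    hence "(of_int (n + int (k+j) + 1 + int t) :: complex) = of_int ((n + 2 * int k) - int (k-j) + 1 + int t)" by metis
    thus "(of_int (n + int (k+j) + 1 + int t) :: complex) = of_int (n + 2 * int k) - of_nat (k-j) + 1 + of_nat t"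
      by simp
  qed
  have c: "(-c)^j * c^(k-j) = (-1)^j * c^k"
  proof -
    have e: "c^j * c^(k-j) = c^k" unfolding power_add[of c j "k-j", symmetric] using assms by simp
    show ?thesis unfolding power_minus[of c j] mult.assoc e ..
  qed
  define A :: complex where "A = fact (k - 1 + j) / (2 ^ j * fact (k - 1 - j) * fact j)"
  define S :: complex where "S = (-1)^(k*(k+1) div 2)"
  define F where "F = ff (k-j) (of_int (n + 2 * int k))"
  have "Dcoef c k j * c^(k-j) * (\<Prod>t<k-j. of_int (n + int (k+j) + 1 + int t))
       = S * A * ((-c)^j * c^(k-j)) * F"
    unfolding p Dcoef_def A_def S_def F_def by (simp only: mult.assoc)
  also have "\<dots> = S * A * ((-1)^j * c^k) * F" unfolding c ..
  also have "\<dots> = S * c^k * (((-1)^j * A) * F)" by (simp only: mult_ac)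
  also have "\<dots> = (-1)^(k*(k+1) div 2) * c^k * (B k j * ff (k-j) (of_int (n + 2 * int k)))"
    unfolding B_def if_P[OF assms] A_def S_def F_def by (simp only: mult.assoc times_divide_eq_right)
  finally show ?thesis .
qed

lemma Dop_eq:
  assumes "k \<ge> 1"
  shows "Dop \<phi> c k f n = \<phi> ((-1)^(k*(k+1) div 2) * c^k * (\<Prod>i<k. of_int (n + 2 * int k) - 2 * of_nat i)) * f (n + 2 * int k)"
proof -
  have "Dop \<phi> c k f n = (\<Sum>j<k. \<phi> (Dcoef c k j * c^(k-j) * (\<Prod>t<k-j. of_int (n + int (k+j) + 1 + int t))) * f (n + 2 * int k))"
    unfolding Dop_def lmul_pow_def lderiv_pow
  proof (intro sum.cong refl)
    fix j assume "j \<in> {..<k}"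
    hence jk: "j < k" by simp
    have i: "n - - int (k + j) + int (k - j) = n + 2 * int k" using jk by simp
    have i2: "\<And>t. n - - int (k + j) + 1 + int t = n + int (k+j) + 1 + int t" by simp
    show "\<phi> (Dcoef c k j) * (\<phi> c ^ (k - j) * (\<Prod>t<k - j. of_int (n - - int (k + j) + 1 + int t)) * f (n - - int (k + j) + int (k - j))) =
         \<phi> (Dcoef c k j * c ^ (k - j) * (\<Prod>t<k - j. of_int (n + int (k + j) + 1 + int t))) * f (n + 2 * int k)"
      unfolding i i2 phi_mult phi_power phi_prod phi_of_int by (simp only: mult.assoc)
  qed
  also have "\<dots> = \<phi> (\<Sum>j<k. Dcoef c k j * c^(k-j) * (\<Prod>t<k-j. of_int (n + int (k+j) + 1 + int t))) * f (n + 2 * int k)"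
    unfolding phi_sum sum_distrib_right ..
  also have "(\<Sum>j<k. Dcoef c k j * c^(k-j) * (\<Prod>t<k-j. of_int (n + int (k+j) + 1 + int t)))
     = (-1)^(k*(k+1) div 2) * c^k * (\<Sum>j<k. B k j * ff (k-j) (of_int (n + 2 * int k)))"
    unfolding sum_distrib_left by (intro sum.cong refl term_eq) simp
  finally show ?thesis unfolding S_prod[OF assms] .
qed

end


theorem mainTheorem9:
  fixes \<phi> :: "complex \<Rightarrow> 'a::comm_ring_1" and c :: complex and m :: nat and p :: "'a poly"
  assumes "is_C_algebra_map \<phi>" and "c \<noteq> 0" and "m \<ge> 1"
  shows "(\<forall>k\<in>{1..m}. laurent_is_poly (Dop \<phi> c k (poly_to_laurent p)))
     \<longleftrightarrow> (\<forall>j. odd j \<and> 1 \<le> j \<and> j \<le> 2 * m - 1 \<longrightarrow> coeff p j = 0)"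
proof -
  interpret calg \<phi> by (rule calg.intro) (rule assms(1))
  define f where "f = poly_to_laurent p"
  define Z where "Z k n = (-1)^(k*(k+1) div 2) * c^k * (\<Prod>i<k. of_int (n + 2 * int k) - 2 * of_nat i :: complex)" for k n
  have D: "\<And>k n. k \<ge> 1 \<Longrightarrow> Dop \<phi> c k f n = \<phi> (Z k n) * f (n + 2 * int k)"
    unfolding Z_def by (rule Dop_eq)
  show ?thesis unfolding f_def[symmetric]
  proof
    assume H: "\<forall>k\<in>{1..m}. laurent_is_poly (Dop \<phi> c k f)"
    show "\<forall>j. odd j \<and> 1 \<le> j \<and> j \<le> 2 * m - 1 \<longrightarrow> coeff p j = 0"
    proof (intro allI impI)
      fix j assume j: "odd j \<and> 1 \<le> j \<and> j \<le> 2 * m - 1"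
      define n where "n = int j - 2 * int m"
      have n: "n < 0" using j assms(3) unfolding n_def by linarith
      have "Dop \<phi> c m f n = 0" using H assms(3) n unfolding laurent_is_poly_def by auto
      moreover have "Dop \<phi> c m f n = \<phi> (Z m n) * coeff p j"
        unfolding D[OF assms(3)] by (simp add: f_def poly_to_laurent_def n_def)
      ultimately have h: "\<phi> (Z m n) * coeff p j = 0" by simp
      have "Z m n \<noteq> 0"
      proof -
        have "(\<Prod>i<m. of_int (n + 2 * int m) - 2 * of_nat i :: complex) \<noteq> 0"
        proof -
          have "of_int (n + 2 * int m) - 2 * of_nat i \<noteq> (0::complex)" for i
          proof -
          have "j \<noteq> 2 * i" using j by auto
          hence "(of_nat j :: complex) \<noteq> of_nat (2 * i)" by (metis of_nat_eq_iff)
          thus "of_int (n + 2 * int m) - 2 * of_nat i \<noteq> (0::complex)" unfolding n_def by simp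
          qed
          thus ?thesis by (simp add: prod_zero_iff)
        qed
        thus ?thesis unfolding Z_def using assms(2) by simp
      qed
      thus "coeff p j = 0" using phi_cancel h by blast
    qed
  next
    assume H: "\<forall>j. odd j \<and> 1 \<le> j \<and> j \<le> 2 * m - 1 \<longrightarrow> coeff p j = 0"
    show "\<forall>k\<in>{1..m}. laurent_is_poly (Dop \<phi> c k f)"
      unfolding laurent_is_poly_def
    proof (intro ballI allI impI)
      fix k n assume k: "k \<in> {1..m}" and n: "n < (0::int)"
      have k1: "k \<ge> 1" using k by simp
      show "Dop \<phi> c k f n = 0"
      proof (cases "n + 2 * int k < 0")
        case True
        thus ?thesis unfolding D[OF k1] by (simp add: f_def poly_to_laurent_def)
      next
        case False
        define N where "N = nat (n + 2 * int k)"
        have NN: "n + 2 * int k = int N" using False unfolding N_def by simp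
        have Nk: "N < 2 * k" using n NN by linarith
        show ?thesis
        proof (cases "odd N")
          case True
          have "k \<le> m" using k by simp
          hence "N \<le> 2 * m - 1" using Nk by linarith
          moreover have "1 \<le> N" using True by (cases N) auto
          ultimately have "coeff p N = 0" using H True by blast
          thus ?thesis unfolding D[OF k1] NN by (simp add: f_def poly_to_laurent_def)
        next
          case False
          then obtain q where q: "N = 2 * q" by (auto elim: evenE)
          have qk: "q < k" using Nk q by simp
          have "(\<Prod>i<k. of_int (n + 2 * int k) - 2 * of_nat i :: complex) = 0"
            using qk unfolding NN q by (intro prod_zero) (auto intro!: bexI[of _ q])
          hence "Z k n = 0" unfolding Z_def by simp
          thus ?thesis unfolding D[OF k1] by (simp add: phi_0)
        qed
      qed
    qed
  qed
qed
end
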